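(* Let $\varepsilon=\left(\begin{smallmatrix} -1&0\\ 0&1 \end{smallmatrix}\right)$, $S=\left(\begin{smallmatrix} 0&-1\\ 1&0 \end{smallmatrix}\right)$, $T=\left(\begin{smallmatrix} 1&1\\ 0&1 \end{smallmatrix}\right)$, $T_{\omega}=\left(\begin{smallmatrix} 1&\omega\\ 0&1 \end{smallmatrix}\right)$ where $\omega=\frac{1+\sqrt{-7}}{2}$, and let $\mathbf{1}$ denote the identity matrix. Then, \begin{itemize} \item [(1)] $P_{k,\Delta}(\bar{z},z)=P_{k,\Delta}(z,\bar{z})$. \item [(2)] $P_{k,\Delta}(uz,\bar{u}\bar{z})=P_{k,\Delta}(z,\bar{z})$ for any unit $u \in \mathcal{O}_d$. \item [(3)] $P_{k,\Delta}|(\mathbf{1}+S)=0$. \item [(4)] $P_{k,\Delta}|(\mathbf{1}+TS\varepsilon-T)=0$. \item [(5)] Additionally, when $d=7$ (so $P_{k,\Delta}\in V_{k,k}(\mathcal{O}_7)$) we have \[ P_{k,\Delta}|(\mathbf{1}-T_{\omega}-ST^{-1}T_{\omega}S-TT_{\omega}^{-1}ST_{\omega})=0.\] \end{itemize}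
   Context: Let $d\in\{1,2,3,7,11\}$, $K=\mathbb{Q}(\sqrt{-d})$ the corresponding Euclidean imaginary quadratic field and $\mathcal{O}_d$ its ring of integers, with norm $N(b)=b\bar b$. Let $k\geq 1$ be an odd integer and $\Delta$ a positive integer that is not a norm of an element of $\mathcal{O}_d$. Define the polynomial $$P_{k,\Delta}(z,\bar{z})=\sum_{\substack{a,c\in\mathbb{Z},\ b\in\mathcal{O}_d\\ N(b)-ac=\Delta \\ c<0<a}} \left(az\bar{z}+bz+\bar{b}\bar{z}+c\right)^{k}.$$ For a polynomial $P(z,\bar z)$ of degree at most $k$ in each of $z,\bar z$ and a matrix $\gamma=\left(\begin{smallmatrix} a&b\\ c&e\end{smallmatrix}\right)$ (with complex entries, modulo $\pm 1$), the right action is $(P|\gamma)(z,\bar z)=(cz+e)^{k}\overline{(cz+e)}^{k}P\left(\frac{az+b}{cz+e},\frac{\bar a\bar z+\bar b}{\bar c\bar z+\bar e}\right)$, extended linearly to formal integer combinations of matrices (the group ring); in particular $P|\varepsilon=P(-z,-\bar z)$. *)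

theory Defs
  imports Complex_Main "HOL-Computational_Algebra.Polynomial"
begin

definition omega_d :: "nat \<Rightarrow> complex" where
  "omega_d d = (if d mod 4 = 3 then (1 + \<i> * complex_of_real (sqrt (real d))) / 2
                else \<i> * complex_of_real (sqrt (real d)))"

definition Od :: "nat \<Rightarrow> complex set" where
  "Od d = {of_int m + of_int n * omega_d d | m n :: int. True}"

definition Nrm :: "complex \<Rightarrow> complex" where
  "Nrm b = b * cnj b"

definition is_unit_Od :: "nat \<Rightarrow> complex \<Rightarrow> bool" where
  "is_unit_Od d u \<longleftrightarrow> u \<in> Od d \<and> u \<noteq> 0 \<and> inverse u \<in> Od d"

text \<open>A polynomial P(z, zbar) is represented as a nested polynomial: the outer
 variable is zbar (written w), its coefficients are polynomials in z.\<close>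

type_synonym bipoly = "complex poly poly"

definition bieval :: "bipoly \<Rightarrow> complex \<Rightarrow> complex \<Rightarrow> complex" where
  "bieval P z w = poly (poly P [:w:]) z"

definition quad_form :: "int \<Rightarrow> complex \<Rightarrow> int \<Rightarrow> bipoly" where
  "quad_form a b c = [: [:of_int c, b:], [:cnj b, of_int a:] :]"
  (* = a z w + b z + cnj b w + c *)

definition P_kD :: "nat \<Rightarrow> nat \<Rightarrow> nat \<Rightarrow> bipoly" where
  "P_kD d k \<Delta> = (\<Sum>(a, b, c) \<in> {(a, b, c) | (a::int) (b::complex) (c::int).
        b \<in> Od d \<and> Nrm b - of_int (a * c) = of_nat \<Delta> \<and> c < 0 \<and> 0 < a}.
      (quad_form a b c) ^ k)"

type_synonym mat2 = "complex \<times> complex \<times> complex \<times> complex"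
  (* (a, b, c, e) stands for the matrix ((a, b), (c, e)) *)

definition mmul :: "mat2 \<Rightarrow> mat2 \<Rightarrow> mat2" where
  "mmul M N = (case M of (a, b, c, e) \<Rightarrow> case N of (a', b', c', e') \<Rightarrow>
     (a * a' + b * c', a * b' + b * e', c * a' + e * c', c * b' + e * e'))"

definition minv :: "mat2 \<Rightarrow> mat2" where
  "minv M = (case M of (a, b, c, e) \<Rightarrow>
     let D = a * e - b * c in (e / D, - b / D, - c / D, a / D))"

definition one_m :: mat2 where "one_m = (1, 0, 0, 1)"
definition eps_m :: mat2 where "eps_m = (-1, 0, 0, 1)"
definition S_m :: mat2 where "S_m = (0, -1, 1, 0)"
definition T_m :: mat2 where "T_m = (1, 1, 0, 1)"
definition omega7 :: complex where
  "omega7 = (1 + \<i> * complex_of_real (sqrt 7)) / 2"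
definition Tw_m :: mat2 where "Tw_m = (1, omega7, 0, 1)"

text \<open>Homogenised substitution in the variable z: for p of degree at most k,
 (cz+e)^k p((az+b)/(cz+e)).\<close>
definition hcomp :: "nat \<Rightarrow> complex \<Rightarrow> complex \<Rightarrow> complex \<Rightarrow> complex \<Rightarrow>
    complex poly \<Rightarrow> complex poly" where
  "hcomp k a b c e p = (\<Sum>i\<le>k. smult (coeff p i) ([:b, a:] ^ i * [:e, c:] ^ (k - i)))"

text \<open>(P|gamma)(z,zbar) = (cz+e)^k (cbar zbar + ebar)^k P((az+b)/(cz+e), (abar zbar+bbar)/(cbar zbar+ebar)),
 for P of degree at most k in each variable, written without division.\<close>
definition slash :: "nat \<Rightarrow> bipoly \<Rightarrow> mat2 \<Rightarrow> bipoly" where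
  "slash k P M = (case M of (a, b, c, e) \<Rightarrow>
     let P1 = map_poly (hcomp k a b c e) P in
     (\<Sum>j\<le>k. [: coeff P1 j :] *
        ([: [:cnj b:], [:cnj a:] :] ^ j * [: [:cnj e:], [:cnj c:] :] ^ (k - j))))"

text \<open>Linear extension to the group ring: an element is a formal integer
 combination of matrices, given as a list of (coefficient, matrix).\<close>
definition slash_gr :: "nat \<Rightarrow> bipoly \<Rightarrow> (int \<times> mat2) list \<Rightarrow> bipoly" where
  "slash_gr k P xs = (\<Sum>(n, M) \<leftarrow> xs. of_int n * slash k P M)"

end

theory Submission
  imports Defs
begin
lemma omega_sq:
  assumes "d \<in> {1,2,3,7,11::nat}"
  shows "\<exists>p q::int. omega_d d * omega_d d = of_int p * omega_d d + of_int q"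
proof -
  have s: "sqrt (real d) * sqrt (real d) = real d" by simp
  show ?thesis
  proof (cases "d mod 4 = 3")
    case True
    then have "d \<in> {3,7,11}" using assms by auto
    then have "\<exists>q::int. 4 * q = - 1 - int d" by (auto intro: exI[of _ "-1"] exI[of _ "-2"] exI[of _ "-3"])
    then obtain q::int where q: "4 * q = - 1 - int d" by blast
    have "omega_d d * omega_d d = of_int 1 * omega_d d + of_int q"
      using True q s by (simp add: omega_d_def complex_eq_iff field_simps)
    then show ?thesis by blast
  next
    case False
    have "omega_d d * omega_d d = of_int 0 * omega_d d + of_int (- int d)"
      using False s by (simp add: omega_d_def complex_eq_iff)
    then show ?thesis by blast
  qed
qed

lemma omega_tr:
  shows "\<exists>t::int. omega_d d + cnj (omega_d d) = of_int t"
  by (cases "d mod 4 = 3") (auto simp: omega_d_def complex_eq_iff intro: exI[of _ 1] exI[of _ 0])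

lemma omega_nrm:
  assumes "d \<in> {1,2,3,7,11::nat}"
  shows "\<exists>n::int. omega_d d * cnj (omega_d d) = of_int n"
proof -
  have s: "sqrt (real d) * sqrt (real d) = real d" by simp
  show ?thesis
  proof (cases "d mod 4 = 3")
    case True
    then have "d \<in> {3,7,11}" using assms by auto
    then have "\<exists>q::int. 4 * q = 1 + int d" by (auto intro: exI[of _ "1"] exI[of _ "2"] exI[of _ "3"])
    then obtain q::int where q: "4 * q = 1 + int d" by blast
    have "omega_d d * cnj (omega_d d) = of_int q"
      using True q s by (simp add: omega_d_def complex_eq_iff field_simps)
    then show ?thesis by blast
  next
    case False
    have "omega_d d * cnj (omega_d d) = of_int (int d)"
      using False s by (simp add: omega_d_def complex_eq_iff)
    then show ?thesis by blast
  qed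
qed

lemma omega_Im:
  assumes "d \<in> {1,2,3,7,11::nat}"
  shows "Im (omega_d d) \<ge> 1/2"
proof -
  define r where "r = sqrt (real d)"
  have h: "r \<ge> 1" using assms by (auto simp: r_def)
  have "Im (omega_d d) = (if d mod 4 = 3 then r/2 else r)" by (simp add: omega_d_def r_def)
  then show ?thesis using h by (cases "d mod 4 = 3") auto
qed

lemma omega_Re: "\<bar>Re (omega_d d)\<bar> \<le> 1"
  by (simp add: omega_d_def)

definition okd :: "nat \<Rightarrow> bool" where "okd d \<longleftrightarrow> d \<in> {1,2,3,7,11}"

lemma Od_iff: "x \<in> Od d \<longleftrightarrow> (\<exists>m n. x = of_int m + of_int n * omega_d d)"
  by (auto simp: Od_def)

lemma Od_int[simp]: "of_int m \<in> Od d"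
  unfolding Od_iff by (rule exI[of _ m], rule exI[of _ 0]) simp

lemma Od_0[simp]: "0 \<in> Od d" using Od_int[of 0 d] by simp
lemma Od_1[simp]: "1 \<in> Od d" using Od_int[of 1 d] by simp

lemma Od_Ints: "x \<in> \<int> \<Longrightarrow> x \<in> Od d"
  by (auto elim: Ints_cases)

lemma Od_omega[simp]: "omega_d d \<in> Od d"
  unfolding Od_iff by (rule exI[of _ 0], rule exI[of _ 1]) simp

lemma Od_add: "x \<in> Od d \<Longrightarrow> y \<in> Od d \<Longrightarrow> x + y \<in> Od d"
proof -
  assume "x \<in> Od d" "y \<in> Od d"
  then obtain m n m' n' where "x = of_int m + of_int n * omega_d d" "y = of_int m' + of_int n' * omega_d d"
    by (auto simp: Od_iff)
  then have "x + y = of_int (m+m') + of_int (n+n') * omega_d d" by (simp add: algebra_simps)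
  then show ?thesis unfolding Od_iff by blast
qed

lemma Od_uminus: "x \<in> Od d \<Longrightarrow> - x \<in> Od d"
proof -
  assume "x \<in> Od d"
  then obtain m n where "x = of_int m + of_int n * omega_d d"
    by (auto simp: Od_iff)
  then have "- x = of_int (-m) + of_int (-n) * omega_d d" by (simp add: algebra_simps)
  then show ?thesis unfolding Od_iff by blast
qed

lemma Od_diff: "x \<in> Od d \<Longrightarrow> y \<in> Od d \<Longrightarrow> x - y \<in> Od d"
  using Od_add[of x d "-y"] Od_uminus[of y d] by simp

lemma Od_mult: "okd d \<Longrightarrow> x \<in> Od d \<Longrightarrow> y \<in> Od d \<Longrightarrow> x * y \<in> Od d"
proof -
  assume ok: "okd d" and "x \<in> Od d" "y \<in> Od d"
  then obtain m n m' n' where xy: "x = of_int m + of_int n * omega_d d" "y = of_int m' + of_int n' * omega_d d"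
    by (auto simp: Od_iff)
  obtain p q where pq: "omega_d d * omega_d d = of_int p * omega_d d + of_int q"
    using omega_sq ok unfolding okd_def by blast
  have "x * y = of_int (m*m') + of_int (m*n'+m'*n) * omega_d d + of_int (n*n') * (omega_d d * omega_d d)"
    unfolding xy by (simp add: algebra_simps)
  also have "\<dots> = of_int (m*m' + n*n'*q) + of_int (m*n'+m'*n + n*n'*p) * omega_d d"
    unfolding pq by (simp add: algebra_simps)
  finally show ?thesis unfolding Od_iff by blast
qed

lemma Od_cnj: "x \<in> Od d \<Longrightarrow> cnj x \<in> Od d"
proof -
  assume "x \<in> Od d"
  then obtain m n where xy: "x = of_int m + of_int n * omega_d d"
    by (auto simp: Od_iff)
  obtain t where t: "omega_d d + cnj (omega_d d) = of_int t" using omega_tr by blast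
  have c: "cnj (omega_d d) = of_int t - omega_d d" using t by (simp add: algebra_simps)
  have "cnj x = of_int (m + n*t) + of_int (-n) * omega_d d"
    unfolding xy by (simp add: c algebra_simps)
  then show ?thesis unfolding Od_iff by blast
qed

lemma Od_tr: "x \<in> Od d \<Longrightarrow> x + cnj x \<in> \<int>"
proof -
  assume "x \<in> Od d"
  then obtain m n where xy: "x = of_int m + of_int n * omega_d d"
    by (auto simp: Od_iff)
  obtain t where t: "omega_d d + cnj (omega_d d) = of_int t" using omega_tr by blast
  have "x + cnj x = of_int (2*m) + of_int n * (omega_d d + cnj (omega_d d))"
    unfolding xy by (simp add: algebra_simps)
  also have "\<dots> = of_int (2*m + n*t)" unfolding t by simp
  finally show ?thesis by simp
qed

lemma Od_nrm: "okd d \<Longrightarrow> x \<in> Od d \<Longrightarrow> x * cnj x \<in> \<int>"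
proof -
  assume ok: "okd d" and "x \<in> Od d"
  then obtain m n where xy: "x = of_int m + of_int n * omega_d d"
    by (auto simp: Od_iff)
  obtain t where t: "omega_d d + cnj (omega_d d) = of_int t" using omega_tr by blast
  obtain N where N: "omega_d d * cnj (omega_d d) = of_int N" using omega_nrm ok unfolding okd_def by blast
  have "x * cnj x = of_int (m*m) + of_int (m*n) * (omega_d d + cnj (omega_d d)) + of_int (n*n) * (omega_d d * cnj (omega_d d))"
    unfolding xy by (simp add: algebra_simps)
  also have "\<dots> = of_int (m*m + m*n*t + n*n*N)" unfolding t N by simp
  finally show ?thesis by simp
qed

type_synonym cx3 = "complex \<times> complex \<times> complex"

definition qf :: "cx3 \<Rightarrow> bipoly" where
  "qf F = (case F of (A, B, C) \<Rightarrow> [: [:C, B:], [:cnj B, A:] :])"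

definition trf :: "mat2 \<Rightarrow> cx3 \<Rightarrow> cx3" where
  "trf M F = (case M of (a, b, c, e) \<Rightarrow> case F of (A, B, C) \<Rightarrow>
     (A*a*cnj a + B*a*cnj c + cnj B*c*cnj a + C*c*cnj c,
      A*a*cnj b + B*a*cnj e + cnj B*c*cnj b + C*c*cnj e,
      A*b*cnj b + B*b*cnj e + cnj B*e*cnj b + C*e*cnj e))"

lemma bieval_add[simp]: "bieval (P + Q) z w = bieval P z w + bieval Q z w"
  by (simp add: bieval_def)
lemma bieval_mult[simp]: "bieval (P * Q) z w = bieval P z w * bieval Q z w"
  by (simp add: bieval_def)
lemma bieval_minus[simp]: "bieval (- P) z w = - bieval P z w"
  by (simp add: bieval_def)
lemma bieval_0[simp]: "bieval 0 z w = 0"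
  by (simp add: bieval_def)
lemma bieval_power[simp]: "bieval (P ^ n) z w = bieval P z w ^ n"
  by (simp add: bieval_def poly_power)
lemma bieval_sum[simp]: "bieval (sum f S) z w = (\<Sum>x\<in>S. bieval (f x) z w)"
  by (induction S rule: infinite_finite_induct) auto
lemma bieval_const[simp]: "bieval [:q:] z w = poly q z"
  by (simp add: bieval_def)
lemma bieval_qf: "bieval (qf (A, B, C)) z w = A*z*w + B*z + cnj B*w + C"
  by (simp add: bieval_def qf_def algebra_simps)

lemma poly_altdef_le: fixes p :: "'a::{comm_semiring_1} poly" assumes "degree p \<le> n" shows "poly p x = (\<Sum>i\<le>n. coeff p i * x ^ i)"
  unfolding poly_altdef
  by (rule sum.mono_neutral_left) (use assms in \<open>auto simp: coeff_eq_0\<close>)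

lemma bieval_smult[simp]: "bieval (smult q P) z w = poly q z * bieval P z w"
  by (simp add: bieval_def)

lemma bieval_altdef: "degree P \<le> n \<Longrightarrow> bieval P z w = (\<Sum>j\<le>n. poly (coeff P j) z * w ^ j)"
  unfolding bieval_def
  by (subst poly_altdef_le[of P n], assumption) (simp add: poly_sum poly_power)

lemma pow_div_trick:
  fixes D X :: complex
  assumes "i \<le> k" "D \<noteq> 0"
  shows "D ^ k * (X / D) ^ i = X ^ i * D ^ (k - i)"
proof -
  have "D ^ k = D ^ i * D ^ (k - i)" using assms(1) by (simp flip: power_add)
  then show ?thesis using assms(2) by (simp add: power_divide field_simps)
qed

lemma hcomp_eval:
  assumes "degree p \<le> k" "c*z+e \<noteq> 0"
  shows "poly (hcomp k a b c e p) z = (c*z+e)^k * poly p ((a*z+b)/(c*z+e))"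
proof -
  have "poly (hcomp k a b c e p) z = (\<Sum>i\<le>k. coeff p i * ((a*z+b)^i * (c*z+e)^(k-i)))"
    by (simp add: hcomp_def poly_sum poly_power algebra_simps)
  also have "\<dots> = (\<Sum>i\<le>k. (c*z+e)^k * (coeff p i * ((a*z+b)/(c*z+e))^i))"
    by (rule sum.cong) (use assms pow_div_trick in auto)
  also have "\<dots> = (c*z+e)^k * poly p ((a*z+b)/(c*z+e))"
    by (simp add: sum_distrib_left poly_altdef_le[OF assms(1)])
  finally show ?thesis .
qed

definition bdeg :: "bipoly \<Rightarrow> nat \<Rightarrow> bool" where
  "bdeg P k \<longleftrightarrow> degree P \<le> k \<and> (\<forall>j. degree (coeff P j) \<le> k)"

lemma hcomp_0[simp]: "hcomp k a b c e 0 = 0"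
  by (simp add: hcomp_def)

lemma slash_eval:
  assumes "bdeg P k" "c*z+e \<noteq> 0" "cnj c*w+cnj e \<noteq> 0"
  shows "bieval (slash k P (a,b,c,e)) z w = (c*z+e)^k * (cnj c*w+cnj e)^k *
     bieval P ((a*z+b)/(c*z+e)) ((cnj a*w+cnj b)/(cnj c*w+cnj e))"
proof -
  let ?D = "c*z+e" and ?E = "cnj c*w+cnj e" and ?X = "cnj a*w+cnj b"
  let ?Z = "(a*z+b)/(c*z+e)"
  have b1: "bieval [: [:cnj b:], [:cnj a:] :] z w = ?X" by (simp add: bieval_def)
  have b2: "bieval [: [:cnj e:], [:cnj c:] :] z w = ?E" by (simp add: bieval_def)
  have "bieval (slash k P (a,b,c,e)) z w =
      (\<Sum>j\<le>k. poly (hcomp k a b c e (coeff P j)) z * (?X ^ j * ?E ^ (k-j)))"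
    by (simp add: slash_def Let_def b1 b2 coeff_map_poly)
  also have "\<dots> = (\<Sum>j\<le>k. ?D^k * ?E^k * (poly (coeff P j) ?Z * (?X/?E)^j))"
  proof (rule sum.cong)
    fix j assume "j \<in> {..k}"
    then have "j \<le> k" by simp
    have "degree (coeff P j) \<le> k" using assms(1) by (simp add: bdeg_def)
    then show "poly (hcomp k a b c e (coeff P j)) z * (?X ^ j * ?E ^ (k-j)) =
        ?D^k * ?E^k * (poly (coeff P j) ?Z * (?X/?E)^j)"
      using hcomp_eval[OF _ assms(2)] pow_div_trick[OF \<open>j \<le> k\<close> assms(3), of ?X]
      by (simp add: algebra_simps)
  qed simp
  also have "\<dots> = ?D^k * ?E^k * bieval P ?Z (?X/?E)"
    using assms(1) unfolding bdeg_def by (subst bieval_altdef[of P k]) (simp_all add: sum_distrib_left)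
  finally show ?thesis .
qed

lemma bieval_map: "poly (map_poly (\<lambda>q. poly q z) P) w = bieval P z w"
proof -
  have "degree (map_poly (\<lambda>q. poly q z) P) \<le> degree P" by (rule degree_le) (auto simp: coeff_map_poly coeff_eq_0)
  then have "poly (map_poly (\<lambda>q. poly q z) P) w = (\<Sum>j\<le>degree P. coeff (map_poly (\<lambda>q. poly q z) P) j * w ^ j)"
    by (rule poly_altdef_le)
  also have "\<dots> = bieval P z w"
    by (subst bieval_altdef[of P "degree P"]) (simp_all add: coeff_map_poly)
  finally show ?thesis .
qed

lemma poly_zero_cofinite:
  fixes p :: "complex poly"
  assumes "finite B" "\<forall>x. x \<notin> B \<longrightarrow> poly p x = 0"
  shows "p = 0"
proof (rule ccontr)
  assume "p \<noteq> 0"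
  then have "finite {x. poly p x = 0}" by (rule poly_roots_finite)
  moreover have "UNIV - B \<subseteq> {x. poly p x = 0}" using assms(2) by auto
  ultimately have "finite (UNIV - B :: complex set)" by (rule rev_finite_subset)
  then have "finite (UNIV :: complex set)" using assms(1) by (metis Diff_infinite_finite)
  then show False using infinite_UNIV_char_0 by blast
qed

lemma bipoly_zeroI:
  assumes "finite A" "finite B" "\<And>z w. z \<notin> A \<Longrightarrow> w \<notin> B \<Longrightarrow> bieval P z w = 0"
  shows "P = 0"
proof (rule poly_eqI)
  fix j
  have "\<forall>z. z \<notin> A \<longrightarrow> poly (coeff P j) z = 0"
  proof (intro allI impI)
    fix z assume z: "z \<notin> A"
    have "map_poly (\<lambda>q. poly q z) P = 0"
      by (rule poly_zero_cofinite[OF assms(2)]) (use assms(3) z bieval_map in auto)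
    then have "coeff (map_poly (\<lambda>q. poly q z) P) j = 0" by simp
    then show "poly (coeff P j) z = 0" by (simp add: coeff_map_poly)
  qed
  then show "coeff P j = coeff 0 j" using poly_zero_cofinite[OF assms(1)] by simp
qed

lemma bipoly_eqI:
  assumes "finite A" "finite B" "\<And>z w. z \<notin> A \<Longrightarrow> w \<notin> B \<Longrightarrow> bieval P z w = bieval Q z w"
  shows "P = Q"
proof -
  have "P - Q = 0"
    by (rule bipoly_zeroI[OF assms(1,2)]) (use assms(3) in \<open>simp add: bieval_def\<close>)
  then show ?thesis by simp
qed

lemma bdeg_qf: "bdeg (qf F) 1"
proof -
  obtain A B C where F: "F = (A,B,C)" by (cases F) auto
  have "degree (qf F) \<le> 1" unfolding F qf_def by simp
  moreover have "degree (coeff (qf F) j) \<le> 1" for j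
    unfolding F qf_def by (cases j; cases "j - 1") (auto simp: coeff_pCons)
  ultimately show ?thesis by (simp add: bdeg_def)
qed

lemma bdeg_mult: "bdeg P m \<Longrightarrow> bdeg Q n \<Longrightarrow> bdeg (P * Q) (m + n)"
proof -
  assume P: "bdeg P m" and Q: "bdeg Q n"
  have "degree (P * Q) \<le> m + n"
    using P Q degree_mult_le[of P Q] by (simp add: bdeg_def)
  moreover have "degree (coeff (P * Q) j) \<le> m + n" for j
    unfolding coeff_mult
  proof (rule degree_sum_le)
    fix i
    have "degree (coeff P i * coeff Q (j - i)) \<le> degree (coeff P i) + degree (coeff Q (j - i))"
      by (rule degree_mult_le)
    also have "\<dots> \<le> m + n" using P Q by (simp add: bdeg_def add_mono)
    finally show "degree (coeff P i * coeff Q (j - i)) \<le> m + n" .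
  qed simp
  ultimately show ?thesis by (simp add: bdeg_def)
qed

lemma bdeg_power: "bdeg P 1 \<Longrightarrow> bdeg (P ^ k) k"
proof (induction k)
  case 0
  have "degree (coeff (1::bipoly) j) \<le> 0" for j by (cases j) (auto simp: one_pCons)
  then show ?case by (simp add: bdeg_def)
next
  case (Suc k)
  then show ?case using bdeg_mult[of P 1 "P^k" k] by simp
qed

lemma bdeg_sum: "finite S \<Longrightarrow> (\<And>x. x \<in> S \<Longrightarrow> bdeg (f x) k) \<Longrightarrow> bdeg (sum f S) k"
  unfolding bdeg_def
  by (auto intro!: degree_sum_le simp: coeff_sum)

lemma qf_aux:
  fixes D E X Y A B cB C :: complex
  assumes "D \<noteq> 0" "E \<noteq> 0"
  shows "D*E*(A*(X/D)*(Y/E) + B*(X/D) + cB*(Y/E) + C) = A*X*Y + B*X*E + cB*D*Y + C*D*E"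
  using assms by (simp add: field_simps)

lemma qf_trf_eval:
  assumes "cnj A = A" "cnj C = C" "c*z+e \<noteq> 0" "cnj c*w+cnj e \<noteq> 0"
  shows "(c*z+e) * (cnj c*w+cnj e) * bieval (qf (A,B,C)) ((a*z+b)/(c*z+e)) ((cnj a*w+cnj b)/(cnj c*w+cnj e))
     = bieval (qf (trf (a,b,c,e) (A,B,C))) z w"
proof -
  have 1: "bieval (qf (trf (a,b,c,e) (A,B,C))) z w = A*(a*z+b)*(cnj a*w+cnj b) + B*(a*z+b)*(cnj c*w+cnj e)
     + cnj B*(c*z+e)*(cnj a*w+cnj b) + C*(c*z+e)*(cnj c*w+cnj e)"
    using assms(1,2) by (simp add: bieval_qf trf_def algebra_simps)
  have 2: "(c*z+e)*(cnj c*w+cnj e)*(A*((a*z+b)/(c*z+e))*((cnj a*w+cnj b)/(cnj c*w+cnj e)) + B*((a*z+b)/(c*z+e)) + cnj B*((cnj a*w+cnj b)/(cnj c*w+cnj e)) + C) = A*(a*z+b)*(cnj a*w+cnj b) + B*(a*z+b)*(cnj c*w+cnj e) + cnj B*(c*z+e)*(cnj a*w+cnj b) + C*(c*z+e)*(cnj c*w+cnj e)"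
    by (rule qf_aux[OF assms(3,4)])
  show ?thesis unfolding 1 bieval_qf by (rule 2)
qed

lemma finite_lin_zero:
  fixes c e :: complex
  assumes "(c, e) \<noteq> (0, 0)"
  shows "finite {z. c*z+e = 0}"
proof (rule finite_subset[of _ "{-e/c}"])
  show "{z. c*z+e = 0} \<subseteq> {-e/c}"
  proof
    fix z assume "z \<in> {z. c*z+e = 0}"
    then have h: "c*z+e = 0" by simp
    then have "c \<noteq> 0" using assms by auto
    then show "z \<in> {-e/c}" using h by (simp add: field_simps add_eq_0_iff)
  qed
qed simp

lemma slash_sum:
  assumes "finite X" "\<forall>F\<in>X. cnj (fst F) = fst F \<and> cnj (snd (snd F)) = snd (snd F)" "(c,e) \<noteq> (0,0)"
  shows "slash k (\<Sum>F\<in>X. qf F ^ k) (a,b,c,e) = (\<Sum>F\<in>X. qf (trf (a,b,c,e) F) ^ k)"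
proof (rule bipoly_eqI)
  show "finite {z. c*z+e = 0}" by (rule finite_lin_zero[OF assms(3)])
  show "finite {w. cnj c*w+cnj e = 0}" by (rule finite_lin_zero) (use assms(3) in auto)
  fix z w assume z: "z \<notin> {z. c*z+e = 0}" and w: "w \<notin> {w. cnj c*w+cnj e = 0}"
  have bd: "bdeg (\<Sum>F\<in>X. qf F ^ k) k"
    by (rule bdeg_sum[OF assms(1)]) (rule bdeg_power[OF bdeg_qf])
  have "bieval (slash k (\<Sum>F\<in>X. qf F ^ k) (a,b,c,e)) z w =
     (c*z+e)^k * (cnj c*w+cnj e)^k * (\<Sum>F\<in>X. bieval (qf F) ((a*z+b)/(c*z+e)) ((cnj a*w+cnj b)/(cnj c*w+cnj e)) ^ k)"
    using slash_eval[OF bd, of c z e w a b] z w by simp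
  also have "\<dots> = (\<Sum>F\<in>X. ((c*z+e) * (cnj c*w+cnj e) * bieval (qf F) ((a*z+b)/(c*z+e)) ((cnj a*w+cnj b)/(cnj c*w+cnj e))) ^ k)"
    by (simp add: sum_distrib_left power_mult_distrib)
  also have "\<dots> = (\<Sum>F\<in>X. bieval (qf (trf (a,b,c,e) F)) z w ^ k)"
  proof (rule sum.cong)
    fix F assume "F \<in> X"
    moreover obtain A B C where F: "F = (A,B,C)" by (cases F) auto
    ultimately have "cnj A = A" "cnj C = C" using assms(2) by auto
    then show "((c*z+e) * (cnj c*w+cnj e) * bieval (qf F) ((a*z+b)/(c*z+e)) ((cnj a*w+cnj b)/(cnj c*w+cnj e))) ^ k
       = bieval (qf (trf (a,b,c,e) F)) z w ^ k"
      unfolding F using qf_trf_eval[of A C c z e w B a b] z w by simp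
  qed simp
  finally show "bieval (slash k (\<Sum>F\<in>X. qf F ^ k) (a,b,c,e)) z w = bieval (\<Sum>F\<in>X. qf (trf (a,b,c,e) F) ^ k) z w"
    by simp
qed

definition S0 :: "nat \<Rightarrow> nat \<Rightarrow> (int \<times> complex \<times> int) set" where
  "S0 d \<Delta> = {(a, b, c) | (a::int) (b::complex) (c::int).
        b \<in> Od d \<and> Nrm b - of_int (a * c) = of_nat \<Delta> \<and> c < 0 \<and> 0 < a}"

lemma abs_le_sq1: "\<bar>x::real\<bar> \<le> x^2 + 1"
proof (cases "\<bar>x\<bar> \<le> 1")
  case True then show ?thesis by (simp add: add_increasing)
next
  case False
  have "\<bar>x\<bar> * 1 \<le> \<bar>x\<bar> * \<bar>x\<bar>" by (rule mult_left_mono) (use False in auto)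
  also have "\<bar>x\<bar> * \<bar>x\<bar> = x^2" by (simp add: power2_eq_square)
  finally show ?thesis by simp
qed

lemma finite_S0:
  assumes ok: "okd d"
  shows "finite (S0 d \<Delta>)"
proof -
  define N where "N = int (5*\<Delta> + 5)"
  let ?f = "\<lambda>(a, m, n, c). (a, of_int m + of_int n * omega_d d, c)"
  have "S0 d \<Delta> \<subseteq> ?f ` ({-N..N} \<times> {-N..N} \<times> {-N..N} \<times> {-N..N})"
  proof
    fix x assume "x \<in> S0 d \<Delta>"
    then obtain a b c where x: "x = (a,b,c)" and b: "b \<in> Od d" and eq: "Nrm b - of_int (a * c) = of_nat \<Delta>"
      and c: "c < 0" and a: "0 < a"
      by (auto simp: S0_def)
    obtain m n where bmn: "b = of_int m + of_int n * omega_d d" using b by (auto simp: Od_iff)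
    have "Re (Nrm b - of_int (a * c)) = Re (of_nat \<Delta>)" using eq by simp
    then have eqr: "(Re b)^2 + (Im b)^2 - real_of_int (a*c) = real \<Delta>"
      by (simp add: Nrm_def power2_eq_square)
    have "a * c \<le> a * (-1)" using a c by (intro mult_left_mono) auto
    then have ac1: "a * c \<le> - a" by simp
    have "a * c \<le> 1 * c" using a c by (intro mult_right_mono_neg) auto
    then have ac2: "a * c \<le> c" by simp
    have sq: "(Re b)^2 \<ge> 0" "(Im b)^2 \<ge> 0" by simp_all
    have aD: "a \<le> int \<Delta>" using eqr ac1 sq by (smt (verit) of_int_le_iff of_int_minus of_int_of_nat_eq)
    have cD: "-c \<le> int \<Delta>" using eqr ac2 sq by (smt (verit) of_int_le_iff of_int_minus of_int_of_nat_eq)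
    have imD: "(Im b)^2 \<le> real \<Delta>" using eqr a c sq
      by (smt (verit) mult_pos_neg of_int_less_0_iff)
    have reD: "(Re b)^2 \<le> real \<Delta>" using eqr a c sq
      by (smt (verit) mult_pos_neg of_int_less_0_iff)
    have imb: "Im b = of_int n * Im (omega_d d)" using bmn by simp
    have reb: "Re b = of_int m + of_int n * Re (omega_d d)" using bmn by simp
    have om: "Im (omega_d d) \<ge> 1/2" using omega_Im ok unfolding okd_def by blast
    have "(of_int n)^2 * (1/2)^2 \<le> (of_int n)^2 * (Im (omega_d d))^2"
      using om by (intro mult_left_mono power_mono) auto
    also have "\<dots> = (Im b)^2" by (simp add: imb power_mult_distrib)
    finally have "(real_of_int n)^2 \<le> 4 * real \<Delta>" using imD by (simp add: power2_eq_square)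
    then have n2: "\<bar>real_of_int n\<bar> \<le> 4 * real \<Delta> + 1" using abs_le_sq1[of "real_of_int n"] by linarith
    then have nN: "\<bar>n\<bar> \<le> N" unfolding N_def by linarith
    have "\<bar>Re b\<bar> \<le> real \<Delta> + 1" using abs_le_sq1[of "Re b"] reD by linarith
    moreover have "\<bar>of_int n * Re (omega_d d)\<bar> \<le> \<bar>real_of_int n\<bar>"
      using omega_Re[of d] by (simp add: abs_mult mult_left_le)
    ultimately have "\<bar>real_of_int m\<bar> \<le> 5 * real \<Delta> + 2" using reb n2 by linarith
    then have mN: "\<bar>m\<bar> \<le> N" unfolding N_def by linarith
    have "(a, m, n, c) \<in> {-N..N} \<times> {-N..N} \<times> {-N..N} \<times> {-N..N}"
      using aD cD a c mN nN unfolding N_def by auto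
    then show "x \<in> ?f ` ({-N..N} \<times> {-N..N} \<times> {-N..N} \<times> {-N..N})"
      unfolding x bmn by (intro image_eqI[of _ _ "(a, m, n, c)"]) auto
  qed
  then show ?thesis by (rule finite_subset) auto
qed

definition Fm :: "nat \<Rightarrow> nat \<Rightarrow> cx3 set" where
  "Fm d \<Delta> = {(A,B,C). A \<in> \<int> \<and> C \<in> \<int> \<and> B \<in> Od d \<and> B * cnj B - A*C = of_nat \<Delta>}"

definition Xs :: "nat \<Rightarrow> nat \<Rightarrow> cx3 set" where
  "Xs d \<Delta> = {F \<in> Fm d \<Delta>. Re (fst F) > 0 \<and> Re (snd (snd F)) < 0}"

definition emb :: "int \<times> complex \<times> int \<Rightarrow> cx3" where
  "emb x = (case x of (a,b,c) \<Rightarrow> (of_int a, b, of_int c))"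

definition negf :: "cx3 \<Rightarrow> cx3" where
  "negf F = (case F of (A,B,C) \<Rightarrow> (-A,-B,-C))"

lemma inj_emb: "inj emb"
  by (auto simp: inj_def emb_def split: prod.splits)

lemma Xs_emb: "Xs d \<Delta> = emb ` S0 d \<Delta>"
proof
  show "Xs d \<Delta> \<subseteq> emb ` S0 d \<Delta>"
  proof
    fix F assume F: "F \<in> Xs d \<Delta>"
    obtain A B C where FA: "F = (A,B,C)" by (cases F) auto
    from F have "A \<in> \<int>" "C \<in> \<int>" by (auto simp: Xs_def Fm_def FA)
    then obtain a c where ac: "A = of_int a" "C = of_int c" by (auto elim!: Ints_cases)
    from F have "(a, B, c) \<in> S0 d \<Delta>" by (auto simp: Xs_def Fm_def FA ac S0_def Nrm_def)
    moreover have "F = emb (a, B, c)" by (simp add: FA ac emb_def)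
    ultimately show "F \<in> emb ` S0 d \<Delta>" by blast
  qed
  show "emb ` S0 d \<Delta> \<subseteq> Xs d \<Delta>"
    by (auto simp: Xs_def Fm_def S0_def emb_def Nrm_def)
qed

lemma P_kD_Xs: "P_kD d k \<Delta> = (\<Sum>F\<in>Xs d \<Delta>. qf F ^ k)"
proof -
  have "P_kD d k \<Delta> = (\<Sum>x\<in>S0 d \<Delta>. qf (emb x) ^ k)"
    unfolding P_kD_def S0_def[symmetric]
    by (rule sum.cong) (auto simp: emb_def qf_def quad_form_def)
  also have "\<dots> = (\<Sum>F\<in>emb ` S0 d \<Delta>. qf F ^ k)"
    by (rule sum.reindex[symmetric, unfolded comp_def]) (use inj_emb in \<open>auto simp: inj_on_def\<close>)
  finally show ?thesis by (simp add: Xs_emb)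
qed

lemma finite_Xs: "okd d \<Longrightarrow> finite (Xs d \<Delta>)"
  by (simp add: Xs_emb finite_S0)

lemma Xs_Fm: "Xs d \<Delta> \<subseteq> Fm d \<Delta>" by (auto simp: Xs_def)

lemma Fm_real: "F \<in> Fm d \<Delta> \<Longrightarrow> cnj (fst F) = fst F \<and> cnj (snd (snd F)) = snd (snd F)"
  by (auto simp: Fm_def elim!: Ints_cases)

lemma Fm_nz:
  assumes "\<not> (\<exists>b\<in>Od d. Nrm b = of_nat \<Delta>)" "F \<in> Fm d \<Delta>"
  shows "Re (fst F) \<noteq> 0 \<and> Re (snd (snd F)) \<noteq> 0"
proof -
  obtain A B C where FA: "F = (A,B,C)" by (cases F) auto
  from assms(2) have "A \<in> \<int>" "C \<in> \<int>" and B: "B \<in> Od d" and disc: "B * cnj B - A*C = of_nat \<Delta>"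
    by (auto simp: Fm_def FA)
  then obtain a c where ac: "A = of_int a" "C = of_int c" by (auto elim!: Ints_cases)
  have "A \<noteq> 0" "C \<noteq> 0" using disc assms(1) B by (auto simp: Nrm_def)
  then show ?thesis by (simp add: FA ac)
qed

lemma negf_Fm: "F \<in> Fm d \<Delta> \<Longrightarrow> negf F \<in> Fm d \<Delta>"
  by (auto simp: Fm_def negf_def Od_uminus)

lemma negf_negf[simp]: "negf (negf F) = F"
  by (simp add: negf_def split: prod.splits)

lemma qf_negf: "qf (negf F) = - qf F"
  by (simp add: qf_def negf_def split: prod.splits)

lemma trf_one: "trf (1,0,0,1) F = F"
  by (simp add: trf_def split: prod.splits)

lemma trf_comp:
  assumes "cnj (fst F) = fst F" "cnj (snd (snd F)) = snd (snd F)"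
  shows "trf M (trf N F) = trf (mmul N M) F"
proof -
  obtain A B C where FA: "F = (A,B,C)" by (cases F) auto
  obtain a b c e where M: "M = (a,b,c,e)" by (cases M) auto
  obtain a' b' c' e' where N: "N = (a',b',c',e')" by (cases N) auto
  have "cnj A = A" "cnj C = C" using assms by (simp_all add: FA)
  then show ?thesis unfolding FA M N
    by (simp add: trf_def mmul_def algebra_simps)
qed

lemma trf_disc:
  assumes "cnj A = A" "cnj C = C" "trf (a,b,c,e) (A,B,C) = (A',B',C')"
  shows "B' * cnj B' - A'*C' = ((a*e - b*c) * cnj (a*e - b*c)) * (B * cnj B - A*C)"
proof -
  have "A' = A*a*cnj a + B*a*cnj c + cnj B*c*cnj a + C*c*cnj c"
       "B' = A*a*cnj b + B*a*cnj e + cnj B*c*cnj b + C*c*cnj e"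
       "C' = A*b*cnj b + B*b*cnj e + cnj B*e*cnj b + C*e*cnj e"
    using assms(3) by (simp_all add: trf_def)
  then show ?thesis using assms(1,2) by (simp add: algebra_simps)
qed

lemma Od_tr': "okd d \<Longrightarrow> x \<in> Od d \<Longrightarrow> y \<in> Od d \<Longrightarrow> z \<in> Od d \<Longrightarrow> x*y*cnj z + cnj x*z*cnj y \<in> \<int>"
proof -
  assume "okd d" "x \<in> Od d" "y \<in> Od d" "z \<in> Od d"
  then have "x*y*cnj z \<in> Od d" by (intro Od_mult Od_cnj) auto
  then have "x*y*cnj z + cnj (x*y*cnj z) \<in> \<int>" by (rule Od_tr)
  then show ?thesis by (simp add: algebra_simps)
qed

lemma trf_Fm:
  assumes ok: "okd d" and ent: "a \<in> Od d" "b \<in> Od d" "c \<in> Od d" "e \<in> Od d"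
    and det: "(a*e - b*c) * cnj (a*e - b*c) = 1" and F: "F \<in> Fm d \<Delta>"
  shows "trf (a,b,c,e) F \<in> Fm d \<Delta>"
proof -
  obtain A B C where FA: "F = (A,B,C)" by (cases F) auto
  from F have AI: "A \<in> \<int>" and CI: "C \<in> \<int>" and B: "B \<in> Od d" and disc: "B * cnj B - A*C = of_nat \<Delta>"
    by (auto simp: Fm_def FA)
  have rA: "cnj A = A" "cnj C = C" using Fm_real[OF F] by (simp_all add: FA)
  have AO: "A \<in> Od d" "C \<in> Od d" using AI CI by (simp_all add: Od_Ints)
  obtain A' B' C' where T: "trf (a,b,c,e) (A,B,C) = (A',B',C')" by (cases "trf (a,b,c,e) (A,B,C)") auto
  have eqs: "A' = A*(a*cnj a) + (B*a*cnj c + cnj B*c*cnj a) + C*(c*cnj c)"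
       "B' = A*a*cnj b + B*a*cnj e + cnj B*c*cnj b + C*c*cnj e"
       "C' = A*(b*cnj b) + (B*b*cnj e + cnj B*e*cnj b) + C*(e*cnj e)"
    using T by (simp_all add: trf_def algebra_simps)
  have n: "a*cnj a \<in> \<int>" "c*cnj c \<in> \<int>" "b*cnj b \<in> \<int>" "e*cnj e \<in> \<int>"
    using Od_nrm ok ent by auto
  have t: "B*a*cnj c + cnj B*c*cnj a \<in> \<int>" "B*b*cnj e + cnj B*e*cnj b \<in> \<int>"
    using Od_tr'[OF ok B] ent by auto
  have "A' \<in> \<int>" "C' \<in> \<int>" unfolding eqs using AI CI n t by (auto intro!: Ints_add Ints_mult)
  moreover have "B' \<in> Od d" unfolding eqs using AO B ent ok
    by (intro Od_add Od_mult Od_cnj; simp)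
  moreover have "B' * cnj B' - A'*C' = of_nat \<Delta>"
    using trf_disc[OF rA T] det disc by simp
  ultimately show ?thesis by (simp add: FA T Fm_def)
qed

definition Jf :: "(int \<times> mat2 \<times> mat2) list \<Rightarrow> cx3 set \<Rightarrow> cx3 \<Rightarrow> int" where
  "Jf L X G = (\<Sum>(c,M,M')\<leftarrow>L. c * (if trf M' G \<in> X then 1 else 0))"

lemma Jf_Nil[simp]: "Jf [] X G = 0" by (simp add: Jf_def)
lemma Jf_Cons[simp]: "Jf ((c,M,M') # L) X G = c * (if trf M' G \<in> X then 1 else 0) + Jf L X G"
  by (simp add: Jf_def)

lemma cancel_step:
  fixes k :: nat
  assumes "finite U" "U \<subseteq> Y" "X \<subseteq> Y" "trf M ` X \<subseteq> U"
    and "\<forall>F\<in>Y. trf M' (trf M F) = F \<and> trf M (trf M' F) = F"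
  shows "(\<Sum>F\<in>X. qf (trf M F) ^ k) = (\<Sum>G\<in>U. (if trf M' G \<in> X then qf G ^ k else 0))"
proof -
  have li: "\<And>F. F \<in> X \<Longrightarrow> trf M' (trf M F) = F" using assms(3,5) by blast
  have inj: "inj_on (trf M) X"
    by (rule inj_on_inverseI[of _ "trf M'"]) (rule li)
  have "(\<Sum>F\<in>X. qf (trf M F) ^ k) = (\<Sum>G\<in>trf M ` X. qf G ^ k)"
    using sum.reindex[OF inj, of "\<lambda>G. qf G ^ k"] by (simp add: comp_def)
  also have "trf M ` X = {G\<in>U. trf M' G \<in> X}"
  proof
    show "trf M ` X \<subseteq> {G\<in>U. trf M' G \<in> X}"
    proof
      fix G assume "G \<in> trf M ` X"
      then obtain F where F: "F \<in> X" "G = trf M F" by blast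
      then have "trf M' G \<in> X" using li by simp
      moreover have "G \<in> U" using assms(4) F by blast
      ultimately show "G \<in> {G\<in>U. trf M' G \<in> X}" by simp
    qed
    show "{G\<in>U. trf M' G \<in> X} \<subseteq> trf M ` X"
    proof
      fix G assume "G \<in> {G\<in>U. trf M' G \<in> X}"
      then have "G \<in> Y" "trf M' G \<in> X" using assms(2) by auto
      then have "trf M (trf M' G) = G" using assms(5) by blast
      then have "G = trf M (trf M' G)" by (rule sym)
      then show "G \<in> trf M ` X" using \<open>trf M' G \<in> X\<close> by (rule image_eqI)
    qed
  qed
  also have "(\<Sum>G\<in>{G\<in>U. trf M' G \<in> X}. qf G ^ k) = (\<Sum>G\<in>U. (if trf M' G \<in> X then qf G ^ k else 0))"
    using assms(1) by (simp add: sum.inter_filter)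
  finally show ?thesis .
qed

lemma cancel_sum:
  fixes k :: nat
  assumes "finite U" "U \<subseteq> Y" "X \<subseteq> Y"
    and "\<forall>(c,M,M')\<in>set L. trf M ` X \<subseteq> U \<and> (\<forall>F\<in>Y. trf M' (trf M F) = F \<and> trf M (trf M' F) = F)"
  shows "(\<Sum>(c,M,M')\<leftarrow>L. of_int c * (\<Sum>F\<in>X. qf (trf M F) ^ k)) = (\<Sum>G\<in>U. of_int (Jf L X G) * qf G ^ k)"
  using assms(4)
proof (induction L)
  case Nil
  then show ?case by simp
next
  case (Cons x L)
  obtain c M M' where x: "x = (c,M,M')" by (cases x) auto
  have px: "trf M ` X \<subseteq> U \<and> (\<forall>F\<in>Y. trf M' (trf M F) = F \<and> trf M (trf M' F) = F)"
    using Cons.prems x by simp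
  have pL: "\<forall>(c,M,M')\<in>set L. trf M ` X \<subseteq> U \<and> (\<forall>F\<in>Y. trf M' (trf M F) = F \<and> trf M (trf M' F) = F)"
    using Cons.prems by simp
  have st: "(\<Sum>F\<in>X. qf (trf M F) ^ k) = (\<Sum>G\<in>U. (if trf M' G \<in> X then qf G ^ k else 0))"
    using px by (intro cancel_step[OF assms(1,2,3)]) simp_all
  have IH: "(\<Sum>(c,M,M')\<leftarrow>L. of_int c * (\<Sum>F\<in>X. qf (trf M F) ^ k)) = (\<Sum>G\<in>U. of_int (Jf L X G) * qf G ^ k)"
    by (rule Cons.IH[OF pL])
  have "(\<Sum>(c,M,M')\<leftarrow>x # L. of_int c * (\<Sum>F\<in>X. qf (trf M F) ^ k)) =
      of_int c * (\<Sum>F\<in>X. qf (trf M F) ^ k) + (\<Sum>(c,M,M')\<leftarrow>L. of_int c * (\<Sum>F\<in>X. qf (trf M F) ^ k))"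
    by (simp add: x)
  also have "\<dots> = of_int c * (\<Sum>G\<in>U. (if trf M' G \<in> X then qf G ^ k else 0)) + (\<Sum>G\<in>U. of_int (Jf L X G) * qf G ^ k)"
    by (simp only: st IH)
  also have "\<dots> = (\<Sum>G\<in>U. of_int c * (if trf M' G \<in> X then qf G ^ k else 0) + of_int (Jf L X G) * qf G ^ k)"
    by (simp only: sum.distrib sum_distrib_left)
  also have "\<dots> = (\<Sum>G\<in>U. of_int (Jf (x # L) X G) * qf G ^ k)"
  proof (rule sum.cong)
    fix G
    show "of_int c * (if trf M' G \<in> X then qf G ^ k else 0) + of_int (Jf L X G) * qf G ^ k =
        of_int (Jf (x # L) X G) * qf G ^ k"
      by (cases "trf M' G \<in> X") (simp_all add: x distrib_right)
  qed simp
  finally show ?case .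
qed

lemma cancel:
  fixes k :: nat
  assumes "finite X" "X \<subseteq> Y" "odd k"
    and "\<forall>(c,M,M')\<in>set L. \<forall>F\<in>Y. trf M F \<in> Y \<and> trf M' (trf M F) = F \<and> trf M (trf M' F) = F"
    and "\<forall>F\<in>Y. negf F \<in> Y"
    and "\<forall>G\<in>Y. Jf L X (negf G) = Jf L X G"
  shows "(\<Sum>(c,M,M')\<leftarrow>L. of_int c * (\<Sum>F\<in>X. qf (trf M F) ^ k)) = 0"
proof -
  have A4: "trf M F \<in> Y \<and> trf M' (trf M F) = F \<and> trf M (trf M' F) = F"
    if "(c,M,M') \<in> set L" "F \<in> Y" for c M M' F
  proof -
    have "case (c,M,M') of (c,M,M') \<Rightarrow> \<forall>F\<in>Y. trf M F \<in> Y \<and> trf M' (trf M F) = F \<and> trf M (trf M' F) = F"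
      using assms(4) that(1) by (rule bspec)
    then show ?thesis using that(2) by simp
  qed
  define W where "W = (\<Union>x\<in>set L. trf (fst (snd x)) ` X)"
  define U where "U = W \<union> negf ` W"
  have fW: "finite W" unfolding W_def using assms(1) by simp
  have fU: "finite U" unfolding U_def using fW by simp
  have WY: "W \<subseteq> Y"
  proof
    fix G assume "G \<in> W"
    then obtain x F where x: "x \<in> set L" "F \<in> X" "G = trf (fst (snd x)) F" unfolding W_def by blast
    obtain c M M' where xc: "x = (c,M,M')" by (cases x) auto
    show "G \<in> Y" using A4[of c M M' F] x xc assms(2) by auto
  qed
  have UY: "U \<subseteq> Y" unfolding U_def using WY assms(5) by blast
  have nn: "negf ` negf ` W = W" by (simp add: image_image)
  have nU: "negf ` U = U" unfolding U_def image_Un nn by blast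
  have injn: "inj_on negf U" by (rule inj_on_inverseI[of _ negf]) (rule negf_negf)
  have main: "(\<Sum>(c,M,M')\<leftarrow>L. of_int c * (\<Sum>F\<in>X. qf (trf M F) ^ k)) = (\<Sum>G\<in>U. of_int (Jf L X G) * qf G ^ k)"
  proof (rule cancel_sum[OF fU UY assms(2)], intro ballI)
    fix x assume x: "x \<in> set L"
    obtain c M M' where xc: "x = (c,M,M')" by (cases x) auto
    have "trf M ` X \<subseteq> U" unfolding U_def W_def using x xc by force
    moreover have "\<forall>F\<in>Y. trf M' (trf M F) = F \<and> trf M (trf M' F) = F"
      using A4[of c M M'] x xc by blast
    ultimately show "case x of (c,M,M') \<Rightarrow> trf M ` X \<subseteq> U \<and> (\<forall>F\<in>Y. trf M' (trf M F) = F \<and> trf M (trf M' F) = F)"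
      using xc by simp
  qed
  define S where "S = (\<Sum>G\<in>U. of_int (Jf L X G) * qf G ^ k)"
  have "S = (\<Sum>G\<in>negf ` U. of_int (Jf L X G) * qf G ^ k)" unfolding S_def nU ..
  also have "\<dots> = (\<Sum>G\<in>U. of_int (Jf L X (negf G)) * qf (negf G) ^ k)"
    using sum.reindex[OF injn, of "\<lambda>G. of_int (Jf L X G) * qf G ^ k"] by (simp add: comp_def)
  also have "\<dots> = (\<Sum>G\<in>U. - (of_int (Jf L X G) * qf G ^ k))"
  proof (rule sum.cong)
    fix G assume "G \<in> U"
    then have "Jf L X (negf G) = Jf L X G" using assms(6) UY by blast
    moreover have "qf (negf G) ^ k = - (qf G ^ k)" using assms(3) by (simp add: qf_negf power_minus_odd)
    ultimately show "of_int (Jf L X (negf G)) * qf (negf G) ^ k = - (of_int (Jf L X G) * qf G ^ k)"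
      by simp
  qed simp
  also have "\<dots> = - S" unfolding S_def by (rule sum_negf)
  finally have SS: "S = - S" .
  have "2 * S = S + S" by (rule mult_2)
  also have "\<dots> = S + - S" using SS by (rule arg_cong)
  also have "\<dots> = 0" by (rule add.right_inverse)
  finally have S2: "2 * S = 0" .
  have "(2::bipoly) \<noteq> 0" by simp
  then have S0: "S = 0" using S2 by (simp only: mult_eq_0_iff) blast
  have "(\<Sum>(c,M,M')\<leftarrow>L. of_int c * (\<Sum>F\<in>X. qf (trf M F) ^ k)) = S" using main unfolding S_def .
  then show ?thesis using S0 by (rule trans)
qed

lemma omega7_eq: "omega_d 7 = omega7"
  by (simp add: omega_d_def omega7_def)

lemma cnj_omega7: "cnj omega7 = 1 - omega7"
  by (simp add: omega7_def complex_eq_iff)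

lemma omega7_sq: "omega7 * omega7 = omega7 - 2"
proof -
  have s: "sqrt 7 * sqrt 7 = (7::real)" by simp
  show ?thesis using s by (simp add: omega7_def complex_eq_iff field_simps)
qed

lemma Od_neg1[simp]: "-1 \<in> Od d" using Od_uminus[OF Od_1] .

lemma trf_negf: "trf M (negf F) = negf (trf M F)"
  by (simp add: trf_def negf_def split: prod.splits)

lemma pair_ok:
  assumes ok: "okd d"
    and e1: "a \<in> Od d" "b \<in> Od d" "c \<in> Od d" "e \<in> Od d"
    and e2: "a' \<in> Od d" "b' \<in> Od d" "c' \<in> Od d" "e' \<in> Od d"
    and d1: "(a*e - b*c) * cnj (a*e - b*c) = 1"
    and d2: "(a'*e' - b'*c') * cnj (a'*e' - b'*c') = 1"
    and m1: "mmul (a,b,c,e) (a',b',c',e') = (1,0,0,1)"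
    and m2: "mmul (a',b',c',e') (a,b,c,e) = (1,0,0,1)"
  shows "\<forall>F\<in>Fm d \<Delta>. trf (a,b,c,e) F \<in> Fm d \<Delta> \<and> trf (a',b',c',e') (trf (a,b,c,e) F) = F
           \<and> trf (a,b,c,e) (trf (a',b',c',e') F) = F"
proof
  fix F assume F: "F \<in> Fm d \<Delta>"
  have r: "cnj (fst F) = fst F" "cnj (snd (snd F)) = snd (snd F)" using Fm_real[OF F] by auto
  show "trf (a,b,c,e) F \<in> Fm d \<Delta> \<and> trf (a',b',c',e') (trf (a,b,c,e) F) = F
           \<and> trf (a,b,c,e) (trf (a',b',c',e') F) = F"
    using trf_Fm[OF ok e1 d1 F] trf_comp[OF r, of "(a',b',c',e')" "(a,b,c,e)"]
      trf_comp[OF r, of "(a,b,c,e)" "(a',b',c',e')"] m1 m2 trf_one by simp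
qed

lemma inXs_iff: "H \<in> Fm d \<Delta> \<Longrightarrow> H \<in> Xs d \<Delta> \<longleftrightarrow> Re (fst H) > 0 \<and> Re (snd (snd H)) < 0"
  by (simp add: Xs_def)

lemma negf_inXs_iff: "H \<in> Fm d \<Delta> \<Longrightarrow> negf H \<in> Xs d \<Delta> \<longleftrightarrow> Re (fst H) < 0 \<and> Re (snd (snd H)) > 0"
  using negf_Fm[of H d \<Delta>] by (auto simp: Xs_def negf_def split: prod.splits)

lemma sum_bij_self:
  assumes "\<forall>x\<in>X. h x \<in> X" "\<forall>x\<in>X. h' x \<in> X" "\<forall>x\<in>X. h' (h x) = x" "\<forall>x\<in>X. h (h' x) = x"
  shows "(\<Sum>x\<in>X. g (h x)) = (\<Sum>x\<in>X. g x)"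
  by (rule sum.reindex_bij_witness[where i = h' and j = h]) (use assms in auto)

definition cj :: "cx3 \<Rightarrow> cx3" where "cj F = (fst F, cnj (fst (snd F)), snd (snd F))"
definition mu :: "complex \<Rightarrow> cx3 \<Rightarrow> cx3" where "mu v F = (fst F, v * fst (snd F), snd (snd F))"

lemma cj_Xs: "F \<in> Xs d \<Delta> \<Longrightarrow> cj F \<in> Xs d \<Delta>"
  by (auto simp: Xs_def Fm_def cj_def Od_cnj mult.commute)

lemma part1:
  assumes ok: "okd d"
  shows "bieval (P_kD d k \<Delta>) w z = bieval (P_kD d k \<Delta>) z w"
proof -
  have "bieval (P_kD d k \<Delta>) w z = (\<Sum>F\<in>Xs d \<Delta>. bieval (qf F) w z ^ k)"
    by (simp add: P_kD_Xs)
  also have "\<dots> = (\<Sum>F\<in>Xs d \<Delta>. bieval (qf (cj F)) z w ^ k)"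
  proof (rule sum.cong)
    fix F :: cx3
    obtain A B C where F: "F = (A,B,C)" by (cases F) auto
    show "bieval (qf F) w z ^ k = bieval (qf (cj F)) z w ^ k"
      by (simp add: F cj_def bieval_qf algebra_simps)
  qed simp
  also have "\<dots> = (\<Sum>F\<in>Xs d \<Delta>. bieval (qf F) z w ^ k)"
  proof (rule sum_bij_self[where h' = cj])
    show "\<forall>x\<in>Xs d \<Delta>. cj x \<in> Xs d \<Delta>" by (simp add: cj_Xs)
    then show "\<forall>x\<in>Xs d \<Delta>. cj x \<in> Xs d \<Delta>" .
    have "\<And>x. cj (cj x) = x" by (simp add: cj_def)
    then show "\<forall>x\<in>Xs d \<Delta>. cj (cj x) = x" "\<forall>x\<in>Xs d \<Delta>. cj (cj x) = x" by simp_all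
  qed
  also have "\<dots> = bieval (P_kD d k \<Delta>) z w"
    by (simp add: P_kD_Xs)
  finally show ?thesis .
qed

lemma unit_norm:
  assumes ok: "okd d" and u: "is_unit_Od d u"
  shows "u * cnj u = 1"
proof -
  have uO: "u \<in> Od d" "inverse u \<in> Od d" "u \<noteq> 0" using u by (auto simp: is_unit_Od_def)
  obtain p where p: "u * cnj u = of_int p" using Od_nrm[OF ok uO(1)] by (auto elim!: Ints_cases)
  obtain q where q: "inverse u * cnj (inverse u) = of_int q" using Od_nrm[OF ok uO(2)] by (auto elim!: Ints_cases)
  have "(u * cnj u) * (inverse u * cnj (inverse u)) = 1"
    using uO(3) by (simp add: field_simps complex_cnj_inverse)
  then have "of_int (p * q) = (1::complex)" using p q by simp
  then have pq: "p * q = 1" by (metis of_int_eq_1_iff)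
  have "Re (u * cnj u) \<ge> 0" by (simp add: power2_eq_square[symmetric])
  then have "p \<ge> 0" using p by simp
  then have "p = 1" using pq zmult_eq_1_iff by auto
  then show ?thesis using p by simp
qed

lemma mu_Xs:
  assumes ok: "okd d" and v: "v \<in> Od d" "v * cnj v = 1" and F: "F \<in> Xs d \<Delta>"
  shows "mu v F \<in> Xs d \<Delta>"
proof -
  obtain A B C where FA: "F = (A,B,C)" by (cases F) auto
  have "v * B * (cnj v * cnj B) = (v * cnj v) * (B * cnj B)" by (simp add: algebra_simps)
  also have "\<dots> = B * cnj B" using v(2) by simp
  finally have e: "v * B * (cnj v * cnj B) = B * cnj B" .
  show ?thesis using F v Od_mult[OF ok v(1)] by (auto simp: Xs_def Fm_def mu_def FA e)
qed

lemma part2: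
  assumes ok: "okd d" and u: "is_unit_Od d u"
  shows "bieval (P_kD d k \<Delta>) (u * z) (cnj u * w) = bieval (P_kD d k \<Delta>) z w"
proof -
  have uu: "u * cnj u = 1" by (rule unit_norm[OF ok u])
  have uO: "u \<in> Od d" using u by (simp add: is_unit_Od_def)
  have cuO: "cnj u \<in> Od d" using Od_cnj[OF uO] .
  have cuu: "cnj u * cnj (cnj u) = 1" using uu by (simp add: mult.commute)
  have "bieval (P_kD d k \<Delta>) (u * z) (cnj u * w) = (\<Sum>F\<in>Xs d \<Delta>. bieval (qf F) (u * z) (cnj u * w) ^ k)"
    by (simp add: P_kD_Xs)
  also have "\<dots> = (\<Sum>F\<in>Xs d \<Delta>. bieval (qf (mu u F)) z w ^ k)"
  proof (rule sum.cong)
    fix F :: cx3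
    obtain A B C where F: "F = (A,B,C)" by (cases F) auto
    have "bieval (qf F) (u * z) (cnj u * w) = A * (u * cnj u) * z * w + (u*B) * z + cnj (u * B) * w + C"
      by (simp add: F bieval_qf algebra_simps)
    also have "\<dots> = bieval (qf (mu u F)) z w" by (simp add: uu F mu_def bieval_qf)
    finally show "bieval (qf F) (u * z) (cnj u * w) ^ k = bieval (qf (mu u F)) z w ^ k" by simp
  qed simp
  also have "\<dots> = (\<Sum>F\<in>Xs d \<Delta>. bieval (qf F) z w ^ k)"
  proof (rule sum_bij_self[where h' = "mu (cnj u)"])
    show "\<forall>x\<in>Xs d \<Delta>. mu u x \<in> Xs d \<Delta>" using mu_Xs[OF ok uO uu] by blast
    show "\<forall>x\<in>Xs d \<Delta>. mu (cnj u) x \<in> Xs d \<Delta>" using mu_Xs[OF ok cuO cuu] by blast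
    have e1: "cnj u * (u * b) = b" for b
    proof -
      have "cnj u * (u * b) = (u * cnj u) * b" by (simp add: algebra_simps)
      then show ?thesis using uu by simp
    qed
    show "\<forall>x\<in>Xs d \<Delta>. mu (cnj u) (mu u x) = x" by (simp add: mu_def e1)
    have e2: "u * (cnj u * b) = b" for b
    proof -
      have "u * (cnj u * b) = (u * cnj u) * b" by (simp add: algebra_simps)
      then show ?thesis using uu by simp
    qed
    show "\<forall>x\<in>Xs d \<Delta>. mu u (mu (cnj u) x) = x" by (simp add: mu_def e2)
  qed
  also have "\<dots> = bieval (P_kD d k \<Delta>) z w"
    by (simp add: P_kD_Xs)
  finally show ?thesis .
qed

lemma Xs_real: "\<forall>F\<in>Xs d \<Delta>. cnj (fst F) = fst F \<and> cnj (snd (snd F)) = snd (snd F)"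
  using Fm_real Xs_Fm by blast

lemma slash_X:
  assumes "okd d" "(c,e) \<noteq> (0,0)"
  shows "slash k (P_kD d k \<Delta>) (a,b,c,e) = (\<Sum>F\<in>Xs d \<Delta>. qf (trf (a,b,c,e) F) ^ k)"
  unfolding P_kD_Xs by (rule slash_sum[OF finite_Xs[OF assms(1)] Xs_real assms(2)])

lemma comb3:
  fixes a c :: real
  assumes "a \<noteq> 0" "c \<noteq> 0"
  shows "(if a>0\<and>c<0 then 1 else 0) + (if c>0\<and>a<0 then 1 else 0) =
         (if a<0\<and>c>0 then 1 else 0) + (if c<0\<and>a>0 then (1::int) else 0)"
  using assms by auto

lemma comb4:
  fixes a c v :: real
  assumes "a \<noteq> 0" "c \<noteq> 0" "v \<noteq> 0"
  shows "(if a>0\<and>c<0 then 1 else 0) + (if c>0\<and>v<0 then 1 else 0) - (if a>0\<and>v<0 then 1 else 0) =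
         (if a<0\<and>c>0 then 1 else 0) + (if c<0\<and>v>0 then 1 else 0) - (if a<0\<and>v>0 then (1::int) else 0)"
  using assms by (cases "a > 0"; cases "c > 0"; cases "v > 0") auto

lemma comb5:
  fixes a c v h :: real
  assumes "a \<noteq> 0" "c \<noteq> 0" "v \<noteq> 0" "h \<noteq> 0"
  shows "(if a>0\<and>c<0 then 1 else 0) - (if a>0\<and>v<0 then 1 else 0) - (if h>0\<and>c<0 then 1 else 0) - (if v>0\<and>h<0 then 1 else 0) =
         (if a<0\<and>c>0 then 1 else 0) - (if a<0\<and>v>0 then 1 else 0) - (if h<0\<and>c>0 then 1 else 0) - (if v<0\<and>h>0 then (1::int) else 0)"
  using assms by (cases "a > 0"; cases "c > 0"; cases "v > 0"; cases "h > 0") auto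

lemma part3:
  assumes ok: "okd d" and k: "odd k" and nn: "\<not> (\<exists>b\<in>Od d. Nrm b = of_nat \<Delta>)"
  shows "slash_gr k (P_kD d k \<Delta>) [(1, one_m), (1, S_m)] = 0"
proof -
  define L :: "(int \<times> mat2 \<times> mat2) list" where
    "L = [(1, (1,0,0,1), (1,0,0,1)), (1, (0,-1,1,0), (0,1,-1,0))]"
  have "slash_gr k (P_kD d k \<Delta>) [(1, one_m), (1, S_m)] =
      (\<Sum>(c,M,M')\<leftarrow>L. of_int c * (\<Sum>F\<in>Xs d \<Delta>. qf (trf M F) ^ k))"
    by (simp add: slash_gr_def one_m_def S_m_def slash_X[OF ok] L_def)
  also have "\<dots> = 0"
  proof (rule cancel[OF finite_Xs[OF ok] Xs_Fm k])
    have p1: "\<forall>F\<in>Fm d \<Delta>. trf (1,0,0,1) F \<in> Fm d \<Delta> \<and> trf (1,0,0,1) (trf (1,0,0,1) F) = F \<and> trf (1,0,0,1) (trf (1,0,0,1) F) = F"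
      by (rule pair_ok[OF ok]) (simp_all add: mmul_def)
    have p2: "\<forall>F\<in>Fm d \<Delta>. trf (0,-1,1,0) F \<in> Fm d \<Delta> \<and> trf (0,1,-1,0) (trf (0,-1,1,0) F) = F \<and> trf (0,-1,1,0) (trf (0,1,-1,0) F) = F"
      by (rule pair_ok[OF ok]) (simp_all add: mmul_def)
    show "\<forall>(c,M,M')\<in>set L. \<forall>F\<in>Fm d \<Delta>. trf M F \<in> Fm d \<Delta> \<and> trf M' (trf M F) = F \<and> trf M (trf M' F) = F"
      unfolding L_def using p1 p2 by simp
    show "\<forall>F\<in>Fm d \<Delta>. negf F \<in> Fm d \<Delta>" using negf_Fm by blast
    show "\<forall>G\<in>Fm d \<Delta>. Jf L (Xs d \<Delta>) (negf G) = Jf L (Xs d \<Delta>) G"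
    proof
      fix G assume G: "G \<in> Fm d \<Delta>"
      obtain A B C where GA: "G = (A,B,C)" by (cases G) auto
      let ?H = "trf (0,1,-1,0) G"
      have H: "?H \<in> Fm d \<Delta>" by (rule trf_Fm[OF ok _ _ _ _ _ G]) simp_all
      have vH: "fst ?H = C" "snd (snd ?H) = A" by (simp_all add: GA trf_def)
      have nz: "Re A \<noteq> 0" "Re C \<noteq> 0" using Fm_nz[OF nn G] by (simp_all add: GA)
      have "Jf L (Xs d \<Delta>) G = (if Re A>0\<and>Re C<0 then 1 else 0) + (if Re C>0\<and>Re A<0 then 1 else 0)"
        using inXs_iff[OF G] inXs_iff[OF H] vH by (simp add: L_def trf_one GA)
      moreover have "Jf L (Xs d \<Delta>) (negf G) = (if Re A<0\<and>Re C>0 then 1 else 0) + (if Re C<0\<and>Re A>0 then 1 else 0)"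
        using negf_inXs_iff[OF G] negf_inXs_iff[OF H] vH by (simp add: L_def trf_one trf_negf GA)
      ultimately show "Jf L (Xs d \<Delta>) (negf G) = Jf L (Xs d \<Delta>) G"
        using comb3[OF nz] by simp
    qed
  qed
  finally show ?thesis .
qed

lemma mTSe: "mmul (mmul T_m S_m) eps_m = (-1,-1,-1,0)"
  by (simp add: mmul_def T_m_def S_m_def eps_m_def)

lemma part4:
  assumes ok: "okd d" and k: "odd k" and nn: "\<not> (\<exists>b\<in>Od d. Nrm b = of_nat \<Delta>)"
  shows "slash_gr k (P_kD d k \<Delta>) [(1, one_m), (1, mmul (mmul T_m S_m) eps_m), (-1, T_m)] = 0"
proof -
  define L :: "(int \<times> mat2 \<times> mat2) list" where
    "L = [(1, (1,0,0,1), (1,0,0,1)), (1, (-1,-1,-1,0), (0,-1,-1,1)), (-1, (1,1,0,1), (1,-1,0,1))]"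
  have "slash_gr k (P_kD d k \<Delta>) [(1, one_m), (1, mmul (mmul T_m S_m) eps_m), (-1, T_m)] =
      (\<Sum>(c,M,M')\<leftarrow>L. of_int c * (\<Sum>F\<in>Xs d \<Delta>. qf (trf M F) ^ k))"
    unfolding mTSe by (simp add: slash_gr_def one_m_def T_m_def slash_X[OF ok] L_def)
  also have "\<dots> = 0"
  proof (rule cancel[OF finite_Xs[OF ok] Xs_Fm k])
    have p1: "\<forall>F\<in>Fm d \<Delta>. trf (1,0,0,1) F \<in> Fm d \<Delta> \<and> trf (1,0,0,1) (trf (1,0,0,1) F) = F \<and> trf (1,0,0,1) (trf (1,0,0,1) F) = F"
      by (rule pair_ok[OF ok]) (simp_all add: mmul_def)
    have p2: "\<forall>F\<in>Fm d \<Delta>. trf (-1,-1,-1,0) F \<in> Fm d \<Delta> \<and> trf (0,-1,-1,1) (trf (-1,-1,-1,0) F) = F \<and> trf (-1,-1,-1,0) (trf (0,-1,-1,1) F) = F"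
      by (rule pair_ok[OF ok]) (simp_all add: mmul_def)
    have p3: "\<forall>F\<in>Fm d \<Delta>. trf (1,1,0,1) F \<in> Fm d \<Delta> \<and> trf (1,-1,0,1) (trf (1,1,0,1) F) = F \<and> trf (1,1,0,1) (trf (1,-1,0,1) F) = F"
      by (rule pair_ok[OF ok]) (simp_all add: mmul_def)
    show "\<forall>(c,M,M')\<in>set L. \<forall>F\<in>Fm d \<Delta>. trf M F \<in> Fm d \<Delta> \<and> trf M' (trf M F) = F \<and> trf M (trf M' F) = F"
      unfolding L_def using p1 p2 p3 by simp
    show "\<forall>F\<in>Fm d \<Delta>. negf F \<in> Fm d \<Delta>" using negf_Fm by blast
    show "\<forall>G\<in>Fm d \<Delta>. Jf L (Xs d \<Delta>) (negf G) = Jf L (Xs d \<Delta>) G"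
    proof
      fix G assume G: "G \<in> Fm d \<Delta>"
      obtain A B C where GA: "G = (A,B,C)" by (cases G) auto
      let ?H = "trf (0,-1,-1,1) G"
      let ?K = "trf (1,-1,0,1) G"
      have H: "?H \<in> Fm d \<Delta>" by (rule trf_Fm[OF ok _ _ _ _ _ G]) simp_all
      have K: "?K \<in> Fm d \<Delta>" by (rule trf_Fm[OF ok _ _ _ _ _ G]) simp_all
      have vH: "fst ?H = C" by (simp_all add: GA trf_def)
      have vK: "fst ?K = A" "snd (snd ?H) = snd (snd ?K)" by (simp_all add: GA trf_def)
      have nz: "Re A \<noteq> 0" "Re C \<noteq> 0" using Fm_nz[OF nn G] by (simp_all add: GA)
      have nzK: "Re (snd (snd ?K)) \<noteq> 0" using Fm_nz[OF nn K] by simp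
      define v where "v = Re (snd (snd ?K))"
      have "Jf L (Xs d \<Delta>) G = (if Re A>0\<and>Re C<0 then 1 else 0) + (if Re C>0\<and>v<0 then 1 else 0) - (if Re A>0\<and>v<0 then 1 else 0)"
        using inXs_iff[OF G] inXs_iff[OF H] inXs_iff[OF K] vH vK by (simp add: L_def trf_one GA v_def)
      moreover have "Jf L (Xs d \<Delta>) (negf G) = (if Re A<0\<and>Re C>0 then 1 else 0) + (if Re C<0\<and>v>0 then 1 else 0) - (if Re A<0\<and>v>0 then 1 else 0)"
        using negf_inXs_iff[OF G] negf_inXs_iff[OF H] negf_inXs_iff[OF K] vH vK by (simp add: L_def trf_one trf_negf GA v_def)
      ultimately show "Jf L (Xs d \<Delta>) (negf G) = Jf L (Xs d \<Delta>) G"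
        using comb4[OF nz nzK[folded v_def]] by simp
    qed
  qed
  finally show ?thesis .
qed

lemma om_a: "(1 - omega7) * omega7 = 2"
  using omega7_sq by (simp add: algebra_simps)
lemma om_b: "omega7 * (1 - omega7) = 2"
  using omega7_sq by (simp add: algebra_simps)

lemma mG3: "mmul (mmul (mmul S_m (minv T_m)) Tw_m) S_m = (-1, 0, omega7 - 1, -1)"
  by (simp add: mmul_def minv_def S_m_def T_m_def Tw_m_def Let_def)

lemma mG4: "mmul (mmul (mmul T_m (minv Tw_m)) S_m) Tw_m = (1 - omega7, 1, 1, omega7)"
proof -
  have "mmul (mmul (mmul T_m (minv Tw_m)) S_m) Tw_m = (1 - omega7, (1 - omega7) * omega7 - 1, 1, omega7)"
    by (simp add: mmul_def minv_def S_m_def T_m_def Tw_m_def Let_def algebra_simps)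
  then show ?thesis by (simp add: om_a)
qed

lemma part5:
  assumes k: "odd k" and nn: "\<not> (\<exists>b\<in>Od 7. Nrm b = of_nat \<Delta>)"
  shows "slash_gr k (P_kD 7 k \<Delta>)
         [(1, one_m), (-1, Tw_m),
          (-1, mmul (mmul (mmul S_m (minv T_m)) Tw_m) S_m),
          (-1, mmul (mmul (mmul T_m (minv Tw_m)) S_m) Tw_m)] = 0"
proof -
  have ok: "okd 7" by (simp add: okd_def)
  have w: "omega7 \<in> Od 7" using Od_omega[of 7] by (simp add: omega7_eq)
  have w1: "1 - omega7 \<in> Od 7" "omega7 - 1 \<in> Od 7" "- omega7 \<in> Od 7"
    using w by (simp_all add: Od_diff Od_uminus)
  define L :: "(int \<times> mat2 \<times> mat2) list" where
    "L = [(1, (1,0,0,1), (1,0,0,1)), (-1, (1,omega7,0,1), (1,-omega7,0,1)),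
          (-1, (-1,0,omega7 - 1,-1), (-1,0,1 - omega7,-1)),
          (-1, (1 - omega7,1,1,omega7), (omega7,-1,-1,1 - omega7))]"
  have "slash_gr k (P_kD 7 k \<Delta>)
         [(1, one_m), (-1, Tw_m),
          (-1, mmul (mmul (mmul S_m (minv T_m)) Tw_m) S_m),
          (-1, mmul (mmul (mmul T_m (minv Tw_m)) S_m) Tw_m)] =
      (\<Sum>(c,M,M')\<leftarrow>L. of_int c * (\<Sum>F\<in>Xs 7 \<Delta>. qf (trf M F) ^ k))"
    unfolding mG3 mG4 by (simp add: slash_gr_def one_m_def Tw_m_def slash_X[OF ok] L_def)
  also have "\<dots> = 0"
  proof (rule cancel[OF finite_Xs[OF ok] Xs_Fm k])
    have p1: "\<forall>F\<in>Fm 7 \<Delta>. trf (1,0,0,1) F \<in> Fm 7 \<Delta> \<and> trf (1,0,0,1) (trf (1,0,0,1) F) = F \<and> trf (1,0,0,1) (trf (1,0,0,1) F) = F"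
      by (rule pair_ok[OF ok]) (simp_all add: mmul_def)
    have p2: "\<forall>F\<in>Fm 7 \<Delta>. trf (1,omega7,0,1) F \<in> Fm 7 \<Delta> \<and> trf (1,-omega7,0,1) (trf (1,omega7,0,1) F) = F \<and> trf (1,omega7,0,1) (trf (1,-omega7,0,1) F) = F"
      by (rule pair_ok[OF ok]) (simp_all add: mmul_def w w1)
    have p3: "\<forall>F\<in>Fm 7 \<Delta>. trf (-1,0,omega7 - 1,-1) F \<in> Fm 7 \<Delta> \<and> trf (-1,0,1 - omega7,-1) (trf (-1,0,omega7 - 1,-1) F) = F \<and> trf (-1,0,omega7 - 1,-1) (trf (-1,0,1 - omega7,-1) F) = F"
      by (rule pair_ok[OF ok]) (simp_all add: mmul_def w w1 algebra_simps)
    have p4: "\<forall>F\<in>Fm 7 \<Delta>. trf (1 - omega7,1,1,omega7) F \<in> Fm 7 \<Delta> \<and> trf (omega7,-1,-1,1 - omega7) (trf (1 - omega7,1,1,omega7) F) = F \<and> trf (1 - omega7,1,1,omega7) (trf (omega7,-1,-1,1 - omega7) F) = F"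
      by (rule pair_ok[OF ok]) (simp_all add: mmul_def w w1 om_a om_b)
    show "\<forall>(c,M,M')\<in>set L. \<forall>F\<in>Fm 7 \<Delta>. trf M F \<in> Fm 7 \<Delta> \<and> trf M' (trf M F) = F \<and> trf M (trf M' F) = F"
      unfolding L_def using p1 p2 p3 p4 by simp
    show "\<forall>F\<in>Fm 7 \<Delta>. negf F \<in> Fm 7 \<Delta>" using negf_Fm by blast
    show "\<forall>G\<in>Fm 7 \<Delta>. Jf L (Xs 7 \<Delta>) (negf G) = Jf L (Xs 7 \<Delta>) G"
    proof
      fix G assume G: "G \<in> Fm 7 \<Delta>"
      obtain A B C where GA: "G = (A,B,C)" by (cases G) auto
      let ?H2 = "trf (1,-omega7,0,1) G"
      let ?H3 = "trf (-1,0,1 - omega7,-1) G"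
      let ?H4 = "trf (omega7,-1,-1,1 - omega7) G"
      have H2: "?H2 \<in> Fm 7 \<Delta>" by (rule trf_Fm[OF ok _ _ _ _ _ G]) (simp_all add: w w1)
      have H3: "?H3 \<in> Fm 7 \<Delta>" by (rule trf_Fm[OF ok _ _ _ _ _ G]) (simp_all add: w w1 algebra_simps)
      have H4: "?H4 \<in> Fm 7 \<Delta>" by (rule trf_Fm[OF ok _ _ _ _ _ G]) (simp_all add: w w1 om_b)
      have v2: "fst ?H2 = A" by (simp add: GA trf_def)
      have v3: "snd (snd ?H3) = C" by (simp add: GA trf_def)
      have v4: "fst ?H4 = snd (snd ?H2)" "snd (snd ?H4) = fst ?H3" by (simp_all add: GA trf_def algebra_simps)
      have nz: "Re A \<noteq> 0" "Re C \<noteq> 0" using Fm_nz[OF nn G] by (simp_all add: GA)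
      have nz2: "Re (snd (snd ?H2)) \<noteq> 0" using Fm_nz[OF nn H2] by simp
      have nz3: "Re (fst ?H3) \<noteq> 0" using Fm_nz[OF nn H3] by simp
      define v where "v = Re (snd (snd ?H2))"
      define h where "h = Re (fst ?H3)"
      have "Jf L (Xs 7 \<Delta>) G = (if Re A>0\<and>Re C<0 then 1 else 0) - (if Re A>0\<and>v<0 then 1 else 0) - (if h>0\<and>Re C<0 then 1 else 0) - (if v>0\<and>h<0 then 1 else 0)"
        using inXs_iff[OF G] inXs_iff[OF H2] inXs_iff[OF H3] inXs_iff[OF H4] v2 v3 v4
        by (simp add: L_def trf_one GA v_def h_def)
      moreover have "Jf L (Xs 7 \<Delta>) (negf G) = (if Re A<0\<and>Re C>0 then 1 else 0) - (if Re A<0\<and>v>0 then 1 else 0) - (if h<0\<and>Re C>0 then 1 else 0) - (if v<0\<and>h>0 then 1 else 0)"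
        using negf_inXs_iff[OF G] negf_inXs_iff[OF H2] negf_inXs_iff[OF H3] negf_inXs_iff[OF H4] v2 v3 v4
        by (simp add: L_def trf_one trf_negf GA v_def h_def)
      ultimately show "Jf L (Xs 7 \<Delta>) (negf G) = Jf L (Xs 7 \<Delta>) G"
        using comb5[OF nz nz2[folded v_def] nz3[folded h_def]] by simp
    qed
  qed
  finally show ?thesis .
qed

theorem proposition2p5:
  fixes d k \<Delta> :: nat
  assumes "d \<in> {1, 2, 3, 7, 11}"
    and "odd k"
    and "0 < \<Delta>"
    and "\<not> (\<exists>b \<in> Od d. Nrm b = of_nat \<Delta>)"
  shows "(\<forall>z w. bieval (P_kD d k \<Delta>) w z = bieval (P_kD d k \<Delta>) z w)
    \<and> (\<forall>u. is_unit_Od d u \<longrightarrow>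
         (\<forall>z w. bieval (P_kD d k \<Delta>) (u * z) (cnj u * w) = bieval (P_kD d k \<Delta>) z w))
    \<and> slash_gr k (P_kD d k \<Delta>) [(1, one_m), (1, S_m)] = 0
    \<and> slash_gr k (P_kD d k \<Delta>) [(1, one_m), (1, mmul (mmul T_m S_m) eps_m), (-1, T_m)] = 0
    \<and> (d = 7 \<longrightarrow> slash_gr k (P_kD d k \<Delta>)
         [(1, one_m), (-1, Tw_m),
          (-1, mmul (mmul (mmul S_m (minv T_m)) Tw_m) S_m),
          (-1, mmul (mmul (mmul T_m (minv Tw_m)) S_m) Tw_m)] = 0)"
proof -
  have ok: "okd d" using assms(1) by (simp add: okd_def)
  have c1: "\<forall>z w. bieval (P_kD d k \<Delta>) w z = bieval (P_kD d k \<Delta>) z w"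
    using part1[OF ok] by blast
  have c2: "\<forall>u. is_unit_Od d u \<longrightarrow>
         (\<forall>z w. bieval (P_kD d k \<Delta>) (u * z) (cnj u * w) = bieval (P_kD d k \<Delta>) z w)"
    using part2[OF ok] by blast
  have c3: "slash_gr k (P_kD d k \<Delta>) [(1, one_m), (1, S_m)] = 0"
    by (rule part3[OF ok assms(2) assms(4)])
  have c4: "slash_gr k (P_kD d k \<Delta>) [(1, one_m), (1, mmul (mmul T_m S_m) eps_m), (-1, T_m)] = 0"
    by (rule part4[OF ok assms(2) assms(4)])
  have c5: "d = 7 \<longrightarrow> slash_gr k (P_kD d k \<Delta>)
         [(1, one_m), (-1, Tw_m),
          (-1, mmul (mmul (mmul S_m (minv T_m)) Tw_m) S_m),
          (-1, mmul (mmul (mmul T_m (minv Tw_m)) S_m) Tw_m)] = 0"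
  proof
    assume d7: "d = 7"
    show "slash_gr k (P_kD d k \<Delta>)
         [(1, one_m), (-1, Tw_m),
          (-1, mmul (mmul (mmul S_m (minv T_m)) Tw_m) S_m),
          (-1, mmul (mmul (mmul T_m (minv Tw_m)) S_m) Tw_m)] = 0"
      unfolding d7 by (rule part5[OF assms(2)]) (use assms(4) d7 in simp)
  qed
  show ?thesis using c1 c2 c3 c4 c5 by blast
qed

end
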